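(* Let $\mathcal{S} \subseteq M_n$ be a quantum graph. Then $\mathcal{S}$ is disconnected if and only if there exists a projection $P \in M_n$ with $P \neq 0$ and $P \neq I_n$ such that $P \mathcal{S} (I_n-P) = \{0\}$.
   Context: $M_n$ denotes the $n\times n$ complex matrices, $I_n$ the identity matrix. A projection is $P\in M_n$ with $P=P^2=P^\dagger$. A quantum graph on $M_n$ is an operator system: a linear subspace $\mathcal{S}\subseteq M_n$ closed under taking adjoints and containing $I_n$. For subspaces $\mathcal{U},\mathcal{V}\subseteq M_n$, $\mathcal{U}\mathcal{V}=\operatorname{span}\{UV : U\in\mathcal{U}, V\in\mathcal{V}\}$, $\mathcal{U}^0=\mathbb{C}I_n$ and $\mathcal{U}^{k+1}=\mathcal{U}^k\mathcal{U}$. For subsets, $P\mathcal{S}Q=\{PAQ : A\in\mathcal{S}\}$. A quantum graph $\mathcal{S}\subseteq M_n$ is connected if there exists $m\in\mathbb{N}$ with $\mathcal{S}^m=M_n$, and disconnected otherwise. *)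

theory Defs
  imports "HOL-Analysis.Analysis"
begin

text \<open>M_n is modelled as complex^'n^'n for a finite index type 'n (n = CARD('n)).
  Linear structure is COMPLEX-linear: scalar multiplication entrywise by complex numbers.\<close>

definition cscale :: "complex \<Rightarrow> complex^'n^'n \<Rightarrow> complex^'n^'n" where
  "cscale c A = (\<chi> i j. c * A$i$j)"

definition csubspace :: "(complex^'n^'n) set \<Rightarrow> bool" where
  "csubspace S = module.subspace cscale S"

definition cspan :: "(complex^'n^'n) set \<Rightarrow> (complex^'n^'n) set" where
  "cspan S = module.span cscale S"

definition adj :: "complex^'n^'n \<Rightarrow> complex^'n^'n" where
  "adj A = (\<chi> i j. cnj (A$j$i))"

definition operator_system :: "(complex^'n^'n) set \<Rightarrow> bool" where
  "operator_system S \<longleftrightarrow> csubspace S \<and> mat 1 \<in> S \<and> (\<forall>A\<in>S. adj A \<in> S)"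

definition subspace_prod :: "(complex^'n^'n) set \<Rightarrow> (complex^'n^'n) set \<Rightarrow> (complex^'n^'n) set" where
  "subspace_prod U V = cspan {A ** B | A B. A \<in> U \<and> B \<in> V}"

fun subspace_pow :: "(complex^'n^'n) set \<Rightarrow> nat \<Rightarrow> (complex^'n^'n) set" where
  "subspace_pow S 0 = cspan {mat 1}"
| "subspace_pow S (Suc k) = subspace_prod (subspace_pow S k) S"

definition qgraph_connected :: "(complex^'n^'n) set \<Rightarrow> bool" where
  "qgraph_connected S \<longleftrightarrow> (\<exists>m. subspace_pow S m = UNIV)"

definition projection :: "complex^'n^'n \<Rightarrow> bool" where
  "projection P \<longleftrightarrow> P ** P = P \<and> adj P = P"

end

theory Submission
  imports Defs
begin

section \<open>Basic matrix algebra\<close>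

lemma cscale_nth[simp]: "cscale c A $ i $ j = c * A $ i $ j"
  by (simp add: cscale_def)

lemma adj_nth[simp]: "adj A $ i $ j = cnj (A $ j $ i)"
  by (simp add: adj_def)

lemma cscale_mat_left: "cscale c A = mat c ** A"
  by (simp add: vec_eq_iff matrix_matrix_mult_def mat_def if_distrib if_distribR sum.delta' cong: if_cong)

lemma cscale_mat_right: "cscale c A = A ** mat c"
  by (simp add: vec_eq_iff matrix_matrix_mult_def mat_def if_distrib if_distribR sum.delta' mult.commute cong: if_cong)

lemma matrix_add_rdistrib': "((B + C) ** (A::'a::semiring_1^'n^'n)) = (B ** A) + (C ** A)"
  by (vector matrix_matrix_mult_def sum.distrib[symmetric] field_simps)

lemma matrix_diff_ldistrib: "((A::'a::ring_1^'n^'n) ** (B - C)) = (A ** B) - (A ** C)"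
  by (vector matrix_matrix_mult_def sum_subtractf[symmetric] field_simps)

lemma matrix_diff_rdistrib: "((B - C) ** (A::'a::ring_1^'n^'n)) = (B ** A) - (C ** A)"
  by (vector matrix_matrix_mult_def sum_subtractf[symmetric] field_simps)

lemma cscale_mult_left: "cscale c A ** B = cscale c (A ** B)"
  by (simp add: cscale_mat_left matrix_mul_assoc)

lemma cscale_mult_right: "A ** cscale c B = cscale c (A ** B)"
  by (simp add: vec_eq_iff matrix_matrix_mult_def sum_distrib_left mult.left_commute)

lemma matrix_sum_left: "(\<Sum>a\<in>t. f a) ** (B::'a::semiring_1^'n^'n) = (\<Sum>a\<in>t. f a ** B)"
  by (induct t rule: infinite_finite_induct) (auto simp: matrix_add_rdistrib')

lemma matrix_sum_right: "(B::'a::semiring_1^'n^'n) ** (\<Sum>a\<in>t. f a) = (\<Sum>a\<in>t. B ** f a)"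
  by (induct t rule: infinite_finite_induct) (auto simp: matrix_add_ldistrib)

lemma adj_adj[simp]: "adj (adj A) = A"
  by (simp add: vec_eq_iff)

lemma adj_mult: "adj (A ** B) = adj B ** adj A"
  by (simp add: vec_eq_iff matrix_matrix_mult_def mult.commute)

lemma adj_add: "adj (A + B) = adj A + adj B"
  by (simp add: vec_eq_iff)

lemma adj_diff: "adj (A - B) = adj A - adj B"
  by (simp add: vec_eq_iff)

lemma adj_cscale: "adj (cscale c A) = cscale (cnj c) (adj A)"
  by (simp add: vec_eq_iff)

lemma adj_mat[simp]: "adj (mat c) = mat (cnj c)"
  by (simp add: vec_eq_iff mat_def)

lemma adj_zero[simp]: "adj 0 = 0"
  by (simp add: vec_eq_iff)

lemma adj_sum: "adj (\<Sum>a\<in>t. f a) = (\<Sum>a\<in>t. adj (f a))"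
  by (induct t rule: infinite_finite_induct) (auto simp: adj_add)

lemma cscale_add: "cscale c (A + B) = cscale c A + cscale c B"
  by (simp add: vec_eq_iff algebra_simps)

lemma cscale_mv: "cscale c A *v x = c *s (A *v x)"
  by (simp add: vec_eq_iff matrix_vector_mult_def sum_distrib_left mult.assoc)

lemma mv_scale: "A *v (c *s x) = c *s (A *v (x::complex^'n))"
  by (simp add: vec_eq_iff matrix_vector_mult_def sum_distrib_left mult.left_commute)

interpretation cm: module cscale
  by unfold_locales (simp_all add: vec_eq_iff algebra_simps)

lemma csubspace_iff: "csubspace S = cm.subspace S"
  by (simp add: csubspace_def)

lemma cspan_eq: "cspan S = cm.span S"
  by (simp add: cspan_def)

section \<open>Powers\<close>

lemma pow_Suc_eq: "subspace_pow S (Suc k) = subspace_prod (subspace_pow S k) S"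
  by simp

declare subspace_pow.simps(2)[simp del]

lemma cm_subspace_mult_left:
  assumes "cm.subspace V" shows "cm.subspace {Y. X ** Y \<in> V}"
  using assms unfolding cm.subspace_def
  by (auto simp: matrix_add_ldistrib cscale_mult_right)

lemma cm_subspace_adj:
  assumes "cm.subspace V" shows "cm.subspace {Y. adj Y \<in> V}"
  using assms unfolding cm.subspace_def
  by (auto simp: adj_add adj_cscale)

lemma pow_subspace: "cm.subspace (subspace_pow S k)"
  by (cases k) (auto simp: pow_Suc_eq subspace_prod_def cspan_eq cm.subspace_span)

lemma pow_prod_base: "Z \<in> subspace_pow S k \<Longrightarrow> A \<in> S \<Longrightarrow> Z ** A \<in> subspace_pow S (Suc k)"
  by (auto simp: pow_Suc_eq subspace_prod_def cspan_eq intro!: cm.span_base)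

lemma pow_one_in:
  assumes "operator_system S" shows "mat 1 \<in> subspace_pow S k"
proof (induct k)
  case 0 then show ?case by (auto simp: cspan_eq intro: cm.span_base)
next
  case (Suc k)
  have "mat 1 ** mat 1 \<in> subspace_pow S (Suc k)"
    by (rule pow_prod_base[OF Suc]) (use assms in \<open>simp add: operator_system_def\<close>)
  then show ?case by simp
qed

lemma pow_mono_Suc:
  assumes "operator_system S" "X \<in> subspace_pow S k" shows "X \<in> subspace_pow S (Suc k)"
proof -
  have "X ** mat 1 \<in> subspace_pow S (Suc k)"
    by (rule pow_prod_base[OF assms(2)]) (use assms in \<open>simp add: operator_system_def\<close>)
  then show ?thesis by simp
qed

lemma pow_mono:
  assumes "operator_system S" "j \<le> k" "X \<in> subspace_pow S j" shows "X \<in> subspace_pow S k"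
  using assms(2,3)
proof (induct k)
  case 0 then show ?case by simp
next
  case (Suc k)
  show ?case
  proof (cases "j = Suc k")
    case True then show ?thesis using Suc by simp
  next
    case False then have "j \<le> k" using Suc by simp
    then show ?thesis using Suc pow_mono_Suc[OF assms(1)] by blast
  qed
qed

lemma pow_S:
  assumes "operator_system S" "A \<in> S" shows "A \<in> subspace_pow S (Suc 0)"
proof -
  have "mat 1 ** A \<in> subspace_pow S (Suc 0)"
    by (rule pow_prod_base[OF pow_one_in[OF assms(1)] assms(2)])
  then show ?thesis by simp
qed

lemma pow_mult:
  assumes "X \<in> subspace_pow S j" "Y \<in> subspace_pow S k"
  shows "X ** Y \<in> subspace_pow S (j + k)"
  using assms(2)
proof (induct k arbitrary: Y)
  case 0
  have "Y \<in> cm.span {mat 1}" using 0 by (simp add: cspan_eq)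
  then show ?case
  proof (rule cm.span_induct)
    show "cm.subspace {Y. X ** Y \<in> subspace_pow S (j + 0)}"
      by (rule cm_subspace_mult_left[OF pow_subspace])
  qed (use assms(1) in auto)
next
  case (Suc k)
  have "Y \<in> cm.span {A ** B |A B. A \<in> subspace_pow S k \<and> B \<in> S}"
    using Suc(2) by (simp add: pow_Suc_eq cspan_eq subspace_prod_def)
  then show ?case
  proof (rule cm.span_induct)
    show "cm.subspace {Y. X ** Y \<in> subspace_pow S (j + Suc k)}"
      by (rule cm_subspace_mult_left[OF pow_subspace])
  next
    fix Y assume "Y \<in> {A ** B |A B. A \<in> subspace_pow S k \<and> B \<in> S}"
    then obtain Z B where ZB: "Y = Z ** B" "Z \<in> subspace_pow S k" "B \<in> S" by blast
    have "(X ** Z) ** B \<in> subspace_pow S (Suc (j + k))"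
      by (rule pow_prod_base[OF Suc(1)[OF ZB(2)] ZB(3)])
    then show "X ** Y \<in> subspace_pow S (j + Suc k)"
      by (simp add: ZB matrix_mul_assoc)
  qed
qed

lemma pow_adj:
  assumes "operator_system S" "X \<in> subspace_pow S k"
  shows "adj X \<in> subspace_pow S k"
  using assms(2)
proof (induct k arbitrary: X)
  case 0
  have "X \<in> cm.span {mat 1}" using 0 by (simp add: cspan_eq)
  then show ?case
  proof (rule cm.span_induct)
    show "cm.subspace {Y. adj Y \<in> subspace_pow S 0}"
      by (rule cm_subspace_adj[OF pow_subspace])
  qed (auto simp: cspan_eq intro: cm.span_base)
next
  case (Suc k)
  have "X \<in> cm.span {A ** B |A B. A \<in> subspace_pow S k \<and> B \<in> S}"
    using Suc(2) by (simp add: pow_Suc_eq cspan_eq subspace_prod_def)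
  then show ?case
  proof (rule cm.span_induct)
    show "cm.subspace {Y. adj Y \<in> subspace_pow S (Suc k)}"
      by (rule cm_subspace_adj[OF pow_subspace])
  next
    fix Y assume "Y \<in> {A ** B |A B. A \<in> subspace_pow S k \<and> B \<in> S}"
    then obtain Z B where ZB: "Y = Z ** B" "Z \<in> subspace_pow S k" "B \<in> S" by blast
    have "adj B \<in> S" using assms(1) ZB(3) by (simp add: operator_system_def)
    then have "adj B \<in> subspace_pow S (Suc 0)" by (rule pow_S[OF assms(1)])
    from pow_mult[OF this Suc(1)[OF ZB(2)]]
    show "adj Y \<in> subspace_pow S (Suc k)"
      by (simp add: ZB adj_mult)
  qed
qed

section \<open>The easy direction\<close>

lemma proj_commute:
  assumes P: "projection P" and A: "P ** A ** (mat 1 - P) = 0" "P ** adj A ** (mat 1 - P) = 0"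
  shows "P ** A = A ** P"
proof -
  have PP: "P ** P = P" "adj P = P" using P by (auto simp: projection_def)
  have "adj (P ** adj A ** (mat 1 - P)) = 0" using A(2) by simp
  then have B: "(mat 1 - P) ** A ** P = 0"
    by (simp add: adj_mult adj_diff PP matrix_mul_assoc)
  have "P ** A = P ** A ** P"
    using A(1) by (simp add: matrix_diff_ldistrib matrix_mul_assoc)
  moreover have "A ** P = P ** A ** P"
    using B by (simp add: matrix_diff_rdistrib matrix_mul_assoc)
  ultimately show ?thesis by simp
qed

lemma easy_direction:
  assumes S: "operator_system S" and P: "projection P" "P \<noteq> 0" "P \<noteq> mat 1"
    and H: "\<forall>A\<in>S. P ** A ** (mat 1 - P) = 0"
  shows "\<not> qgraph_connected S"
proof
  assume "qgraph_connected S"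
  then obtain m where m: "subspace_pow S m = UNIV" by (auto simp: qgraph_connected_def)
  have PP: "P ** P = P" "adj P = P" using P by (auto simp: projection_def)
  have comm: "P ** A = A ** P" if "A \<in> S" for A
    using proj_commute[OF P(1)] H that S by (auto simp: operator_system_def)
  let ?C = "{X. P ** X = X ** P}"
  have Csub: "cm.subspace ?C"
    unfolding cm.subspace_def
    by (auto simp: matrix_add_ldistrib matrix_add_rdistrib' cscale_mult_right cscale_mult_left)
  have all: "X \<in> ?C" if "X \<in> subspace_pow S k" for X k
    using that
  proof (induct k arbitrary: X)
    case 0
    have "X \<in> cm.span {mat 1}" using 0 by (simp add: cspan_eq)
    then show ?case by (rule cm.span_induct) (use Csub in auto)
  next
    case (Suc k)
    have "X \<in> cm.span {A ** B |A B. A \<in> subspace_pow S k \<and> B \<in> S}"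
      using Suc(2) by (simp add: pow_Suc_eq cspan_eq subspace_prod_def)
    then show ?case
    proof (rule cm.span_induct)
      fix Y assume "Y \<in> {A ** B |A B. A \<in> subspace_pow S k \<and> B \<in> S}"
      then obtain Z B where ZB: "Y = Z ** B" "Z \<in> subspace_pow S k" "B \<in> S" by blast
      have "P ** Z = Z ** P" using Suc(1)[OF ZB(2)] by simp
      moreover have "P ** B = B ** P" using comm ZB(3) by simp
      ultimately have "P ** (Z ** B) = (Z ** B) ** P"
        by (metis matrix_mul_assoc)
      then show "Y \<in> ?C" by (simp add: ZB)
    qed (use Csub in auto)
  qed
  obtain a j where aj: "P $ a $ j \<noteq> 0" using P(2) by (auto simp: vec_eq_iff)
  obtain k b where "P $ k $ b \<noteq> mat 1 $ k $ b" using P(3) by (auto simp: vec_eq_iff)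
  then have kb: "(mat 1 - P) $ k $ b \<noteq> 0" by simp
  define E :: "complex^'a^'a" where "E = (\<chi> r s. if r = j \<and> s = k then 1 else 0)"
  define X where "X = P ** E ** (mat 1 - P)"
  have inner: "(\<Sum>kb\<in>UNIV. if kb = j \<and> ka = k then P $ a $ j else 0) = (if ka = k then P $ a $ j else 0)" for ka
    by (cases "ka = k") auto
  have "X $ a $ b = P $ a $ j * (mat 1 - P) $ k $ b"
    by (simp add: inner add: X_def E_def matrix_matrix_mult_def if_distrib if_distribR sum.delta' cong: if_cong)
  then have X0: "X \<noteq> 0" using aj kb by auto
  have "P ** X = X" by (simp add: X_def matrix_mul_assoc PP)
  moreover have "X ** P = 0"
    by (simp add: X_def matrix_mul_assoc[symmetric] matrix_diff_rdistrib PP)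
  moreover have "X \<in> ?C" using all[of X m] m by simp
  ultimately show False using X0 by simp
qed

section \<open>Complex inner product\<close>

definition cinner :: "complex^'n \<Rightarrow> complex^'n \<Rightarrow> complex" where
  "cinner x y = (\<Sum>i\<in>UNIV. cnj (x $ i) * y $ i)"

lemma cinner_add_right: "cinner x (y + z) = cinner x y + cinner x z"
  by (simp add: cinner_def algebra_simps sum.distrib)

lemma cinner_diff_right: "cinner x (y - z) = cinner x y - cinner x z"
  by (simp add: cinner_def algebra_simps sum_subtractf)

lemma cinner_add_left: "cinner (x + y) z = cinner x z + cinner y z"
  by (simp add: cinner_def algebra_simps sum.distrib)

lemma cinner_diff_left: "cinner (x - y) z = cinner x z - cinner y z"
  by (simp add: cinner_def algebra_simps sum_subtractf)

lemma cinner_scale_right: "cinner x (c *s y) = c * cinner x y"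
  by (simp add: cinner_def sum_distrib_left mult.left_commute)

lemma cinner_scale_left: "cinner (c *s x) y = cnj c * cinner x y"
  by (simp add: cinner_def sum_distrib_left mult.assoc)

lemma cinner_zero_left[simp]: "cinner 0 y = 0"
  by (simp add: cinner_def)

lemma cinner_zero_right[simp]: "cinner x 0 = 0"
  by (simp add: cinner_def)

lemma cinner_commute: "cinner y x = cnj (cinner x y)"
  by (simp add: cinner_def mult.commute)

lemma cinner_adj: "cinner x (A *v y) = cinner (adj A *v x) y"
proof -
  have "cinner x (A *v y) = (\<Sum>i\<in>UNIV. \<Sum>j\<in>UNIV. cnj (x $ i) * (A $ i $ j * y $ j))"
    by (simp add: cinner_def matrix_vector_mult_def sum_distrib_left)
  also have "\<dots> = (\<Sum>j\<in>UNIV. \<Sum>i\<in>UNIV. cnj (x $ i) * (A $ i $ j * y $ j))"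
    by (rule sum.swap)
  also have "\<dots> = cinner (adj A *v x) y"
    by (simp add: cinner_def matrix_vector_mult_def sum_distrib_left sum_distrib_right mult_ac)
  finally show ?thesis .
qed

lemma inner_cinner: "inner x y = Re (cinner x y)"
  by (simp add: inner_vec_def cinner_def inner_complex_def)

lemma cinner_self_eq_0: "cinner x x = 0 \<longleftrightarrow> x = 0"
proof -
  have "Re (cinner x x) = inner x x" by (simp add: inner_cinner)
  moreover have "Im (cinner x x) = 0"
    by (simp add: cinner_def)
  ultimately have "cinner x x = complex_of_real (inner x x)"
    by (simp add: complex_eq_iff)
  then show ?thesis by simp
qed

lemma cinner_self_norm: "cinner x x = complex_of_real ((norm x)\<^sup>2)"
proof -
  have "Re (cinner x x) = inner x x" by (simp add: inner_cinner)
  moreover have "Im (cinner x x) = 0"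
    by (simp add: cinner_def)
  ultimately show ?thesis
    by (simp add: complex_eq_iff power2_norm_eq_inner)
qed

lemma cinner_all_zero: "(\<And>z. cinner z x = 0) \<Longrightarrow> x = 0"
  using cinner_self_eq_0 by blast

lemma scaleR_vec_cscale: "c *\<^sub>R (x::complex^'n) = complex_of_real c *s x"
proof -
  have "(c *\<^sub>R x) $ i = (complex_of_real c *s x) $ i" for i
  proof -
    have "(c *\<^sub>R x) $ i = c *\<^sub>R (x $ i)" by simp
    also have "\<dots> = complex_of_real c * x $ i" by (rule scaleR_conv_of_real)
    finally show ?thesis by simp
  qed
  then show ?thesis by (simp add: vec_eq_iff)
qed

lemma mv_nonzero: "(A::complex^'n^'n) \<noteq> 0 \<Longrightarrow> \<exists>x. A *v x \<noteq> 0"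
  using matrix_eq[of A 0] by auto

lemma mat_mv: "mat c *v (x::complex^'n) = c *s x"
  by (simp add: vec_eq_iff matrix_vector_mult_def mat_def if_distrib if_distribR sum.delta' cong: if_cong)

section \<open>Orthogonal projections\<close>

lemma vec_subspace_real:
  assumes "vec.subspace (V::(complex^'n) set)" shows "subspace V"
  using assms unfolding vec.subspace_def subspace_def by (auto simp: scaleR_vec_cscale)

lemma orth_decomp_exists:
  assumes V: "vec.subspace (V::(complex^'n) set)"
  shows "\<exists>y. y \<in> V \<and> (\<forall>w\<in>V. cinner w (x - y) = 0)"
proof -
  have sp: "span V = V" using vec_subspace_real[OF V] by simp
  obtain y z where yz: "y \<in> span V" "\<And>w. w \<in> span V \<Longrightarrow> orthogonal z w" "x = y + z"
    using orthogonal_subspace_decomp_exists by blast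
  have "cinner w z = 0" if w: "w \<in> V" for w
  proof -
    have "Re (cinner z w) = 0" using yz(2)[of w] w sp by (simp add: orthogonal_def inner_cinner)
    moreover have "\<i> *s w \<in> V" using V w by (simp add: vec.subspace_scale)
    then have "Re (cinner z (\<i> *s w)) = 0" using yz(2)[of "\<i> *s w"] sp by (simp add: orthogonal_def inner_cinner)
    ultimately have "cinner z w = 0" by (simp add: cinner_scale_right complex_eq_iff)
    then show ?thesis by (simp add: cinner_commute[of w z])
  qed
  then show ?thesis using yz sp by (intro exI[of _ y]) auto
qed

lemma orth_decomp_unique:
  assumes V: "vec.subspace (V::(complex^'n) set)"
    and y1: "y1 \<in> V" "\<forall>w\<in>V. cinner w (x - y1) = 0"
    and y2: "y2 \<in> V" "\<forall>w\<in>V. cinner w (x - y2) = 0"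
  shows "y1 = y2"
proof -
  have d: "y1 - y2 \<in> V" using V y1 y2 by (simp add: vec.subspace_diff)
  have "cinner (y1 - y2) (y1 - y2) = cinner (y1 - y2) (x - y2) - cinner (y1 - y2) (x - y1)"
    by (simp add: cinner_diff_right[symmetric])
  also have "\<dots> = 0" using d y1 y2 by simp
  finally show ?thesis by (simp add: cinner_self_eq_0)
qed

lemma projection_exists:
  assumes V: "vec.subspace (V::(complex^'n) set)"
  shows "\<exists>P. projection P \<and> (\<forall>x. P *v x \<in> V) \<and> (\<forall>v\<in>V. P *v v = v)"
proof -
  define Q where "Q x = (SOME y. y \<in> V \<and> (\<forall>w\<in>V. cinner w (x - y) = 0))" for x
  have Q: "Q x \<in> V \<and> (\<forall>w\<in>V. cinner w (x - Q x) = 0)" for x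
    unfolding Q_def by (rule someI_ex) (rule orth_decomp_exists[OF V])
  have Qu: "Q x = y" if "y \<in> V" "\<forall>w\<in>V. cinner w (x - y) = 0" for x y
    using orth_decomp_unique[OF V] Q that by blast
  have Qadd: "Q (x + y) = Q x + Q y" for x y
  proof (rule Qu)
    show "Q x + Q y \<in> V" using Q V by (simp add: vec.subspace_add)
    show "\<forall>w\<in>V. cinner w (x + y - (Q x + Q y)) = 0"
    proof
      fix w assume "w \<in> V"
      have "cinner w (x + y - (Q x + Q y)) = cinner w (x - Q x) + cinner w (y - Q y)"
        by (simp add: cinner_add_right[symmetric] algebra_simps)
      then show "cinner w (x + y - (Q x + Q y)) = 0" using Q \<open>w \<in> V\<close> by simp
    qed
  qed
  have Qscale: "Q (c *s x) = c *s Q x" for c x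
  proof (rule Qu)
    show "c *s Q x \<in> V" using Q V by (simp add: vec.subspace_scale)
    show "\<forall>w\<in>V. cinner w (c *s x - c *s Q x) = 0"
    proof
      fix w assume "w \<in> V"
      have "cinner w (c *s x - c *s Q x) = c * cinner w (x - Q x)"
        by (simp add: cinner_scale_right[symmetric] vec.scale_right_diff_distrib)
      then show "cinner w (c *s x - c *s Q x) = 0" using Q \<open>w \<in> V\<close> by simp
    qed
  qed
  have lin: "Vector_Spaces.linear (*s) (*s) Q"
    by unfold_locales (simp_all add: Qadd Qscale)
  define P where "P = matrix Q"
  have PQ: "P *v x = Q x" for x unfolding P_def by (rule matrix_works[OF lin])
  have QV: "Q v = v" if "v \<in> V" for v
    by (rule Qu[OF that]) simp
  have PP: "P ** P = P"
    by (simp add: matrix_eq matrix_vector_mul_assoc[symmetric] PQ QV Q)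
  have "cinner w (adj P *v x) = cinner w (P *v x)" for w x
  proof -
    have "cinner w (adj P *v x) = cinner (Q w) x"
      by (simp add: cinner_adj PQ)
    also have "\<dots> = cinner (Q w) (Q x) + cinner (Q w) (x - Q x)"
      by (simp add: cinner_diff_right)
    also have "\<dots> = cinner (Q w) (Q x)" using Q by simp
    also have "\<dots> = cinner (Q w) (Q x) + cnj (cinner (Q x) (w - Q w))" using Q by simp
    also have "\<dots> = cinner w (Q x)"
      by (simp add: cinner_commute[of "Q x"] cinner_diff_left)
    finally show ?thesis by (simp add: PQ)
  qed
  then have "adj P *v x = P *v x" for x
    using cinner_all_zero[of "adj P *v x - P *v x"] by (simp add: cinner_diff_right)
  then have "adj P = P" by (simp add: matrix_eq)
  with PP have "projection P" by (simp add: projection_def)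
  then show ?thesis using PQ Q QV by auto
qed

section \<open>Rayleigh quotient argument\<close>

lemma quad_nonneg_linear_zero:
  fixes a b :: real
  assumes H: "\<And>t. 0 \<le> 2 * t * a + t\<^sup>2 * b" and b: "0 \<le> b"
  shows "a = 0"
proof -
  define t where "t = - a / (b + 1)"
  have b1: "b + 1 > 0" using b by simp
  have tb: "t * (b + 1) = - a" using b1 by (simp add: t_def)
  have "0 \<le> 2 * t * a + t\<^sup>2 * b" by (rule H)
  then have "0 \<le> (2 * t * a + t\<^sup>2 * b) * (b + 1)\<^sup>2" using b1 by simp
  also have "(2 * t * a + t\<^sup>2 * b) * (b + 1)\<^sup>2 = 2 * a * (t * (b + 1)) * (b + 1) + b * (t * (b + 1))\<^sup>2"
    by (simp add: power2_eq_square algebra_simps)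
  also have "\<dots> = - (a\<^sup>2 * (b + 2))" unfolding tb by (simp add: power2_eq_square algebra_simps)
  finally have "a\<^sup>2 * (b + 2) \<le> 0" by simp
  moreover have "b + 2 > 0" using b by simp
  ultimately have "a\<^sup>2 \<le> 0" by (simp add: mult_le_0_iff)
  then show ?thesis by simp
qed

lemma cinner_expand:
  "cinner (y + c *s z) (D *v (y + c *s z)) =
     cinner y (D *v y) + c * cinner y (D *v z) + cnj c * cinner z (D *v y) + cnj c * c * cinner z (D *v z)"
  by (simp add: matrix_vector_right_distrib mv_scale cinner_add_left cinner_add_right
      cinner_scale_left cinner_scale_right algebra_simps)

lemma hermitian_real:
  assumes "adj D = D" shows "Im (cinner z (D *v z)) = 0"
proof -
  have "cinner z (D *v z) = cinner (D *v z) z" using cinner_adj[of z D z] assms by simp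
  also have "\<dots> = cnj (cinner z (D *v z))" by (rule cinner_commute)
  finally show ?thesis by (metis Reals_cnj_iff complex_is_Real_iff)
qed

lemma rayleigh:
  assumes h: "adj h = h" and W: "vec.subspace (W::(complex^'n) set)" and y0: "y0 \<in> W" "y0 \<noteq> 0"
  shows "\<exists>y\<in>W. y \<noteq> 0 \<and> (\<exists>l::real. \<forall>z\<in>W. cinner z ((mat (complex_of_real l) - h) *v y) = 0)"
proof -
  define f where "f y = Re (cinner y (h *v y))" for y :: "complex^'n"
  define K where "K = W \<inter> sphere 0 1"
  have "closed W" by (rule closed_subspace[OF vec_subspace_real[OF W]])
  then have cK: "compact K" unfolding K_def by (intro closed_Int_compact compact_sphere)
  define u where "u = complex_of_real (1 / norm y0) *s y0"
  have "u = (1 / norm y0) *\<^sub>R y0" by (simp add: u_def scaleR_vec_cscale)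
  then have "norm u = 1" using y0 by simp
  moreover have "u \<in> W" unfolding u_def using W y0 by (simp add: vec.subspace_scale)
  ultimately have neK: "K \<noteq> {}" unfolding K_def by auto
  have cf: "continuous_on K f"
    unfolding f_def cinner_def matrix_vector_mult_def
    by (intro continuous_intros)
  obtain y where y: "y \<in> K" "\<And>z. z \<in> K \<Longrightarrow> f z \<le> f y"
    using continuous_attains_sup[OF cK neK cf] by blast
  define l where "l = f y"
  define D where "D = mat (complex_of_real l) - h"
  have adjD: "adj D = D" by (simp add: D_def adj_diff h)
  have Dv: "D *v z = complex_of_real l *s z - h *v z" for z
    by (simp add: D_def matrix_vector_mult_diff_rdistrib mat_mv)
  define q where "q z = Re (cinner z (D *v z))" for z
  have qf: "q z = l * (norm z)\<^sup>2 - f z" for z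
    by (simp add: q_def f_def Dv cinner_diff_right cinner_scale_right cinner_self_norm)
  have yW: "y \<in> W" and ny: "norm y = 1" using y(1) by (auto simp: K_def)
  have qy: "q y = 0" using ny by (simp add: qf l_def)
  have qpos: "0 \<le> q z" if z: "z \<in> W" for z
  proof (cases "z = 0")
    case True then show ?thesis by (simp add: q_def)
  next
    case False
    define c where "c = 1 / norm z"
    define v where "v = complex_of_real c *s z"
    have "v = c *\<^sub>R z" by (simp add: v_def scaleR_vec_cscale)
    then have "norm v = 1" using False by (simp add: c_def)
    moreover have "v \<in> W" unfolding v_def using W z by (simp add: vec.subspace_scale)
    ultimately have "f v \<le> l" using y(2) unfolding K_def l_def by auto
    moreover have "f v = c\<^sup>2 * f z"
    proof -
      have "cinner v (h *v v) = complex_of_real (c\<^sup>2) * cinner z (h *v z)"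
        by (simp add: v_def mv_scale cinner_scale_left cinner_scale_right power2_eq_square)
      then show ?thesis by (simp add: f_def)
    qed
    ultimately have "c\<^sup>2 * f z \<le> l" by simp
    then have "(norm z)\<^sup>2 * (c\<^sup>2 * f z) \<le> (norm z)\<^sup>2 * l" by (simp add: mult_left_mono)
    moreover have nc: "(norm z)\<^sup>2 * c\<^sup>2 = 1" using False by (simp add: c_def field_simps)
    moreover have "(norm z)\<^sup>2 * (c\<^sup>2 * f z) = f z" using nc by (metis mult.assoc mult_1)
    ultimately have "f z \<le> (norm z)\<^sup>2 * l" by simp
    then have "f z \<le> l * (norm z)\<^sup>2" by (simp only: mult.commute)
    then show ?thesis by (simp add: qf)
  qed
  have re0: "Re (cinner z (D *v y)) = 0" if z: "z \<in> W" for z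
  proof (rule quad_nonneg_linear_zero)
    show "0 \<le> q z" by (rule qpos[OF z])
    fix t :: real
    have "y + complex_of_real t *s z \<in> W" using W z yW by (simp add: vec.subspace_scale vec.subspace_add)
    then have "0 \<le> q (y + complex_of_real t *s z)" by (rule qpos)
    also have "q (y + complex_of_real t *s z) = q y + t * Re (cinner y (D *v z)) + t * Re (cinner z (D *v y)) + t\<^sup>2 * q z"
      by (simp add: q_def cinner_expand power2_eq_square)
    also have "Re (cinner y (D *v z)) = Re (cinner z (D *v y))"
    proof -
      have "cinner y (D *v z) = cinner (D *v y) z" using cinner_adj[of y D z] adjD by simp
      also have "\<dots> = cnj (cinner z (D *v y))" by (rule cinner_commute)
      finally show ?thesis by simp
    qed
    finally show "0 \<le> 2 * t * Re (cinner z (D *v y)) + t\<^sup>2 * q z" using qy by simp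
  qed
  have "cinner z (D *v y) = 0" if z: "z \<in> W" for z
  proof -
    have "\<i> *s z \<in> W" using W z by (simp add: vec.subspace_scale)
    then have "Re (cinner (\<i> *s z) (D *v y)) = 0" by (rule re0)
    then have "Im (cinner z (D *v y)) = 0" by (simp add: cinner_scale_left)
    moreover have "Re (cinner z (D *v y)) = 0" by (rule re0[OF z])
    ultimately show ?thesis by (simp add: complex_eq_iff)
  qed
  moreover have "y \<noteq> 0" using ny by auto
  ultimately show ?thesis using yW unfolding D_def by blast
qed

section \<open>Rank\<close>

lemma range_mv_subspace: "vec.subspace (range ((*v) (T::complex^'n^'n)))"
  unfolding vec.subspace_def
proof (intro conjI ballI allI)
  show "0 \<in> range ((*v) T)" by (metis matrix_vector_mult_0_right rangeI)
next
  fix x y assume "x \<in> range ((*v) T)" "y \<in> range ((*v) T)"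
  then obtain a b where "x = T *v a" "y = T *v b" by auto
  then have "x + y = T *v (a + b)" by (simp add: matrix_vector_right_distrib)
  then show "x + y \<in> range ((*v) T)" by auto
next
  fix c x assume "x \<in> range ((*v) T)"
  then obtain a where "x = T *v a" by auto
  then have "c *s x = T *v (c *s a)" by (simp add: mv_scale)
  then show "c *s x \<in> range ((*v) T)" by auto
qed

lemma rank_drop:
  fixes T G :: "complex^'n^'n"
  assumes y: "y \<in> range ((*v) T)" "y \<noteq> 0" "G *v y = 0"
  shows "vec.dim (range ((*v) (G ** T))) < vec.dim (range ((*v) T))"
proof -
  define W where "W = range ((*v) T)"
  have ind: "vec.independent {y}" using y(2) by (simp add: vec.dependent_single)
  obtain B where B: "{y} \<subseteq> B" "B \<subseteq> W" "vec.independent B" "W \<subseteq> vec.span B"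
    using vec.maximal_independent_subset_extend[of "{y}" W] ind y(1) unfolding W_def by auto
  have fin: "finite B" using B(3) by (rule vec.finiteI_independent)
  have dimW: "vec.dim W = card B" using B by (intro vec.dim_unique) auto
  have yB: "y \<in> B" using B(1) by auto
  have sub: "vec.subspace {w. G *v w \<in> vec.span ((\<lambda>x. G *v x) ` (B - {y}))}"
    unfolding vec.subspace_def
    by (auto simp: matrix_vector_right_distrib mv_scale vec.span_add vec.span_scale vec.span_zero)
  have img: "G *v w \<in> vec.span ((\<lambda>x. G *v x) ` (B - {y}))" if "w \<in> W" for w
  proof -
    have "w \<in> vec.span B" using B(4) that by auto
    then show ?thesis
    proof (rule vec.span_induct)
      show "vec.subspace {w. G *v w \<in> vec.span ((\<lambda>x. G *v x) ` (B - {y}))}" by (rule sub)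
    next
      fix x assume "x \<in> B"
      show "G *v x \<in> vec.span ((\<lambda>x. G *v x) ` (B - {y}))"
      proof (cases "x = y")
        case True then show ?thesis using y(3) by (simp add: vec.span_zero)
      next
        case False then show ?thesis using \<open>x \<in> B\<close> by (intro vec.span_base) auto
      qed
    qed
  qed
  have "range ((*v) (G ** T)) = (\<lambda>x. G *v x) ` W"
    unfolding W_def by (auto simp: matrix_vector_mul_assoc[symmetric] image_iff)
  then have "range ((*v) (G ** T)) \<subseteq> vec.span ((\<lambda>x. G *v x) ` (B - {y}))"
    using img by auto
  then have "vec.dim (range ((*v) (G ** T))) \<le> card ((\<lambda>x. G *v x) ` (B - {y}))"
    using fin by (intro vec.dim_le_card) auto
  also have "\<dots> \<le> card (B - {y})" using fin by (intro card_image_le) auto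
  also have "\<dots> < card B" using fin yB by (meson card_Diff1_less)
  finally show ?thesis using dimW unfolding W_def by simp
qed

section \<open>Burnside-type argument for unital *-algebras\<close>

lemma mv_axis: "((A::complex^'n^'n) *v axis j 1) $ i = A $ i $ j"
  by (simp add: matrix_vector_mult_def axis_def if_distrib if_distribR sum.delta' cong: if_cong)

lemma cscale_combine: "cscale a X + cscale b X = cscale (a + b) X"
  by (simp add: vec_eq_iff algebra_simps)

lemma cscale_cscale: "cscale a (cscale b X) = cscale (a * b) X"
  by (simp add: vec_eq_iff algebra_simps)

lemma mat_cscale_one: "mat c = cscale c (mat 1)"
  by (simp add: cscale_mat_left)

lemma mat_one_nonzero: "(mat 1 :: complex^'n^'n) \<noteq> 0"
proof
  assume "(mat 1 :: complex^'n^'n) = 0"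
  then have "(mat 1 :: complex^'n^'n) $ undefined $ undefined = 0" by simp
  then show False by (simp add: mat_def)
qed

lemma transitivity:
  fixes Alg :: "(complex^'n^'n) set"
  assumes sub: "cm.subspace Alg" and one: "mat 1 \<in> Alg"
    and mult: "\<And>X Y. X \<in> Alg \<Longrightarrow> Y \<in> Alg \<Longrightarrow> X ** Y \<in> Alg"
    and adjc: "\<And>X. X \<in> Alg \<Longrightarrow> adj X \<in> Alg"
    and noproj: "\<And>P. projection P \<Longrightarrow> P \<noteq> 0 \<Longrightarrow> P \<noteq> mat 1 \<Longrightarrow> \<exists>X\<in>Alg. P ** X ** (mat 1 - P) \<noteq> 0"
    and x: "x \<noteq> 0"
  shows "\<exists>a\<in>Alg. a *v x = y"
proof (rule ccontr)
  assume nt: "\<not> (\<exists>a\<in>Alg. a *v x = y)"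
  define V where "V = {a *v x | a. a \<in> Alg}"
  have Vsub: "vec.subspace V"
    unfolding vec.subspace_def
  proof (intro conjI ballI allI)
    show "0 \<in> V" unfolding V_def using cm.subspace_0[OF sub] by force
  next
    fix u v assume "u \<in> V" "v \<in> V"
    then obtain a b where "u = a *v x" "v = b *v x" "a \<in> Alg" "b \<in> Alg" by (auto simp: V_def)
    then show "u + v \<in> V" unfolding V_def
      by (auto intro!: exI[of _ "a + b"] cm.subspace_add[OF sub] simp: matrix_vector_mult_add_rdistrib)
  next
    fix c u assume "u \<in> V"
    then obtain a where "u = a *v x" "a \<in> Alg" by (auto simp: V_def)
    then show "c *s u \<in> V" unfolding V_def
      by (auto intro!: exI[of _ "cscale c a"] cm.subspace_scale[OF sub] simp: cscale_mv)
  qed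
  have yV: "y \<notin> V" using nt by (auto simp: V_def)
  obtain P where P: "projection P" "\<And>z. P *v z \<in> V" "\<And>v. v \<in> V \<Longrightarrow> P *v v = v"
    using projection_exists[OF Vsub] by blast
  have PP: "P ** P = P" "adj P = P" using P(1) by (auto simp: projection_def)
  have xV: "x \<in> V" unfolding V_def using one by (auto intro!: exI[of _ "mat 1"])
  have P0: "P \<noteq> 0"
  proof
    assume "P = 0" then have "P *v x = 0" by simp
    with P(3)[OF xV] x show False by simp
  qed
  have P1: "P \<noteq> mat 1"
  proof
    assume "P = mat 1" then have "P *v y = y" by simp
    with P(2)[of y] yV show False by simp
  qed
  have key: "(mat 1 - P) ** X ** P = 0" if X: "X \<in> Alg" for X
  proof (subst matrix_eq, intro allI)
    fix z
    obtain b where b: "P *v z = b *v x" "b \<in> Alg" using P(2)[of z] by (auto simp: V_def)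
    have "X *v (P *v z) = (X ** b) *v x" by (simp add: b matrix_vector_mul_assoc)
    then have XV: "X *v (P *v z) \<in> V" unfolding V_def using mult[OF X b(2)] by auto
    have "((mat 1 - P) ** X ** P) *v z = (mat 1 - P) *v (X *v (P *v z))"
      by (simp add: matrix_vector_mul_assoc matrix_mul_assoc)
    also have "\<dots> = 0" using P(3)[OF XV] by (simp add: matrix_vector_mult_diff_rdistrib)
    finally show "((mat 1 - P) ** X ** P) *v z = 0 *v z" by simp
  qed
  have "P ** X ** (mat 1 - P) = 0" if X: "X \<in> Alg" for X
  proof -
    have "adj ((mat 1 - P) ** adj X ** P) = 0" using key[OF adjc[OF X]] by simp
    then show ?thesis by (simp add: adj_mult adj_diff PP matrix_mul_assoc)
  qed
  then show False using noproj[OF P(1) P0 P1] by blast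
qed

lemma burnside_units:
  fixes Alg :: "(complex^'n^'n) set"
  assumes sub: "cm.subspace Alg" and one: "mat 1 \<in> Alg"
    and mult: "\<And>X Y. X \<in> Alg \<Longrightarrow> Y \<in> Alg \<Longrightarrow> X ** Y \<in> Alg"
    and adjc: "\<And>X. X \<in> Alg \<Longrightarrow> adj X \<in> Alg"
    and noproj: "\<And>P. projection P \<Longrightarrow> P \<noteq> 0 \<Longrightarrow> P \<noteq> mat 1 \<Longrightarrow> \<exists>X\<in>Alg. P ** X ** (mat 1 - P) \<noteq> 0"
  shows "(\<chi> r s. if r = r0 \<and> s = s0 then 1 else 0) \<in> Alg"
proof -
  have trans: "\<exists>a\<in>Alg. a *v x = y" if "x \<noteq> 0" for x y
    by (rule transitivity[OF sub one mult adjc noproj that])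
  define good where "good T \<longleftrightarrow> T \<in> Alg \<and> adj T = T \<and> T \<noteq> 0" for T
  define rk where "rk T = vec.dim (range ((*v) (T::complex^'n^'n)))" for T
  have "good (mat 1)" using one mat_one_nonzero by (simp add: good_def)
  then obtain T where T: "good T" and Tmin: "\<And>T'. good T' \<Longrightarrow> rk T \<le> rk T'"
    using ex_has_least_nat[of good "mat 1" rk] by metis
  have TA: "T \<in> Alg" and Th: "adj T = T" and T0: "T \<noteq> 0" using T by (auto simp: good_def)
  obtain x0 where x0: "T *v x0 \<noteq> 0" using mv_nonzero[OF T0] by blast
  have herm: "\<exists>\<mu>. T ** h ** T = cscale \<mu> (T ** T)" if h: "h \<in> Alg" "adj h = h" for h
  proof -
    obtain y l where y: "y \<in> range ((*v) T)" "y \<noteq> 0"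
      and orth: "\<And>z. z \<in> range ((*v) T) \<Longrightarrow> cinner z ((mat (complex_of_real l) - h) *v y) = 0"
      using rayleigh[OF h(2) range_mv_subspace, of "T *v x0"] x0 by blast
    define D where "D = mat (complex_of_real l) - h"
    have DA: "D \<in> Alg" unfolding D_def mat_cscale_one[of "complex_of_real l"]
      using sub one h(1) by (intro cm.subspace_diff cm.subspace_scale) auto
    have Dh: "adj D = D" by (simp add: D_def adj_diff h(2))
    have TDy: "(T ** D) *v y = 0"
    proof (rule cinner_all_zero)
      fix u
      have "cinner u ((T ** D) *v y) = cinner (T *v u) (D *v y)"
        by (simp add: matrix_vector_mul_assoc[symmetric] cinner_adj Th)
      also have "\<dots> = 0" using orth[of "T *v u"] by (simp add: D_def)
      finally show "cinner u ((T ** D) *v y) = 0" .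
    qed
    have "rk ((T ** D) ** T) < rk T"
      unfolding rk_def by (rule rank_drop[OF y TDy])
    then have "\<not> good ((T ** D) ** T)" using Tmin leD by blast
    moreover have "(T ** D) ** T \<in> Alg" using mult TA DA by blast
    moreover have "adj ((T ** D) ** T) = (T ** D) ** T"
      by (simp add: adj_mult Th Dh matrix_mul_assoc)
    ultimately have z: "(T ** D) ** T = 0" by (simp add: good_def)
    have "(T ** D) ** T = cscale (complex_of_real l) (T ** T) - T ** h ** T"
    proof -
      have "T ** D = cscale (complex_of_real l) T - T ** h"
        unfolding D_def matrix_diff_ldistrib cscale_mat_right[of _ T] ..
      then show ?thesis by (simp add: matrix_diff_rdistrib cscale_mult_left)
    qed
    with z have "T ** h ** T = cscale (complex_of_real l) (T ** T)" by simp
    then show ?thesis by blast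
  qed
  have allA: "\<exists>\<mu>. T ** a ** T = cscale \<mu> (T ** T)" if a: "a \<in> Alg" for a
  proof -
    define h1 where "h1 = cscale (1/2) (a + adj a)"
    define h2 where "h2 = cscale (- (\<i>/2)) (a - adj a)"
    have h1A: "h1 \<in> Alg" unfolding h1_def using sub a adjc
      by (intro cm.subspace_scale cm.subspace_add) auto
    have h2A: "h2 \<in> Alg" unfolding h2_def using sub a adjc
      by (intro cm.subspace_scale cm.subspace_diff) auto
    have h1h: "adj h1 = h1" by (simp add: h1_def adj_cscale adj_add add.commute)
    have h2h: "adj h2 = h2" by (simp add: h2_def vec_eq_iff algebra_simps)
    have aeq: "a = h1 + cscale \<i> h2"
      by (simp add: h1_def h2_def vec_eq_iff field_simps)
    obtain m1 where m1: "T ** h1 ** T = cscale m1 (T ** T)" using herm[OF h1A h1h] by blast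
    obtain m2 where m2: "T ** h2 ** T = cscale m2 (T ** T)" using herm[OF h2A h2h] by blast
    have "T ** a ** T = T ** h1 ** T + cscale \<i> (T ** h2 ** T)"
      by (simp add: aeq matrix_add_ldistrib matrix_add_rdistrib' cscale_mult_left cscale_mult_right)
    also have "\<dots> = cscale (m1 + \<i> * m2) (T ** T)"
      by (simp add: m1 m2 cscale_cscale cscale_combine)
    finally show ?thesis by blast
  qed
  define w0 where "w0 = T *v (T *v x0)"
  have "cinner x0 w0 = cinner (T *v x0) (T *v x0)"
    unfolding w0_def by (simp add: cinner_adj Th)
  then have w0: "w0 \<noteq> 0" using x0 cinner_self_eq_0 by fastforce
  have col: "\<exists>\<mu>. T *v y = \<mu> *s w0" for y
  proof -
    obtain a where a: "a \<in> Alg" "a *v (T *v x0) = y" using trans[OF x0] by blast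
    obtain \<mu> where \<mu>: "T ** a ** T = cscale \<mu> (T ** T)" using allA[OF a(1)] by blast
    have "T *v y = (T ** a ** T) *v x0" by (simp add: a(2)[symmetric] matrix_vector_mul_assoc matrix_mul_assoc)
    also have "\<dots> = \<mu> *s w0" by (simp add: \<mu> cscale_mv w0_def matrix_vector_mul_assoc)
    finally show ?thesis by blast
  qed
  define \<nu> where "\<nu> j = (SOME \<mu>. T *v axis j 1 = \<mu> *s w0)" for j
  have \<nu>: "T *v axis j 1 = \<nu> j *s w0" for j
    unfolding \<nu>_def by (rule someI_ex) (rule col)
  have Tent: "T $ k $ j = \<nu> j * w0 $ k" for k j
    using arg_cong[OF \<nu>[of j], of "\<lambda>v. v $ k"] by (simp add: mv_axis)
  obtain k1 j1 where "T $ k1 $ j1 \<noteq> 0" using T0 by (auto simp: vec_eq_iff)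
  then have "\<nu> j1 \<noteq> 0" by (simp add: Tent)
  define \<nu>c where "\<nu>c = (\<chi> l. cnj (\<nu> l))"
  have \<nu>c0: "\<nu>c \<noteq> 0"
  proof
    assume "\<nu>c = 0"
    then have "\<nu>c $ j1 = 0" by simp
    with \<open>\<nu> j1 \<noteq> 0\<close> show False by (simp add: \<nu>c_def)
  qed
  obtain a where a: "a \<in> Alg" "a *v w0 = axis r0 1" using trans[OF w0] by blast
  obtain b' where b': "b' \<in> Alg" "b' *v \<nu>c = axis s0 1" using trans[OF \<nu>c0] by blast
  define b where "b = adj b'"
  have bA: "b \<in> Alg" using adjc[OF b'(1)] by (simp add: b_def)
  have aT: "(a ** T) $ r $ l = \<nu> l * (a *v w0) $ r" for r l
    by (simp add: matrix_matrix_mult_def matrix_vector_mult_def Tent sum_distrib_left mult_ac)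
  have nb: "(\<Sum>l\<in>UNIV. \<nu> l * b $ l $ s) = cnj ((b' *v \<nu>c) $ s)" for s
    by (simp add: b_def \<nu>c_def matrix_vector_mult_def mult.commute)
  have "(a ** T ** b) $ r $ s = (a *v w0) $ r * (\<Sum>l\<in>UNIV. \<nu> l * b $ l $ s)" for r s
  proof -
    have "(a ** T ** b) $ r $ s = (\<Sum>l\<in>UNIV. (a ** T) $ r $ l * b $ l $ s)"
      by (simp add: matrix_matrix_mult_def)
    also have "\<dots> = (a *v w0) $ r * (\<Sum>l\<in>UNIV. \<nu> l * b $ l $ s)"
      by (simp add: aT sum_distrib_left mult_ac)
    finally show ?thesis .
  qed
  then have "a ** T ** b = (\<chi> r s. if r = r0 \<and> s = s0 then 1 else 0)"
    by (simp add: vec_eq_iff nb a(2) b'(2) axis_def)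
  moreover have "a ** T ** b \<in> Alg" using mult a(1) TA bA by blast
  ultimately show ?thesis by simp
qed

section \<open>Main theorem\<close>

lemma matrix_unit_expansion:
  fixes X :: "complex^'n^'n"
  shows "X = (\<Sum>p\<in>UNIV. cscale (X $ fst p $ snd p) (\<chi> r s. if r = fst p \<and> s = snd p then 1 else 0))"
proof -
  have "(\<Sum>p\<in>UNIV. cscale (X $ fst p $ snd p) (\<chi> r s. if r = fst p \<and> s = snd p then 1 else 0)) $ i $ j
        = X $ i $ j" for i j
  proof -
    have "(\<Sum>p\<in>UNIV. cscale (X $ fst p $ snd p) (\<chi> r s. if r = fst p \<and> s = snd p then 1 else 0)) $ i $ j
        = (\<Sum>x\<in>UNIV. X $ fst x $ snd x * (if i = fst x \<and> j = snd x then 1 else 0))"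
      by (simp add: sum_component)
    also have "\<dots> = (\<Sum>p\<in>UNIV. if p = (i, j) then X $ i $ j else 0)"
      by (rule sum.cong) auto
    also have "\<dots> = X $ i $ j" by (simp add: sum.delta')
    finally show ?thesis .
  qed
  then show ?thesis by (simp add: vec_eq_iff)
qed

lemma hard_direction:
  fixes S :: "(complex^'n^'n) set"
  assumes S: "operator_system S"
    and H: "\<not> (\<exists>P. projection P \<and> P \<noteq> 0 \<and> P \<noteq> mat 1 \<and> (\<forall>A\<in>S. P ** A ** (mat 1 - P) = 0))"
  shows "qgraph_connected S"
proof -
  define Alg where "Alg = (\<Union>k. subspace_pow S k)"
  have inAlg: "X \<in> Alg \<longleftrightarrow> (\<exists>k. X \<in> subspace_pow S k)" for X by (auto simp: Alg_def)
  have sub: "cm.subspace Alg"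
    unfolding cm.subspace_def
  proof (intro conjI ballI allI)
    show "0 \<in> Alg" using cm.subspace_0[OF pow_subspace] inAlg by blast
  next
    fix x y assume "x \<in> Alg" "y \<in> Alg"
    then obtain j k where "x \<in> subspace_pow S j" "y \<in> subspace_pow S k" by (auto simp: inAlg)
    then have "x \<in> subspace_pow S (max j k)" "y \<in> subspace_pow S (max j k)"
      using pow_mono[OF S] by (meson max.cobounded1 max.cobounded2)+
    then show "x + y \<in> Alg" using cm.subspace_add[OF pow_subspace] inAlg by blast
  next
    fix c x assume "x \<in> Alg"
    then show "cscale c x \<in> Alg" using cm.subspace_scale[OF pow_subspace] inAlg by blast
  qed
  have one: "mat 1 \<in> Alg" using pow_one_in[OF S] inAlg by blast
  have mult: "X ** Y \<in> Alg" if "X \<in> Alg" "Y \<in> Alg" for X Y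
    using that pow_mult inAlg by blast
  have adjc: "adj X \<in> Alg" if "X \<in> Alg" for X
    using that pow_adj[OF S] inAlg by blast
  have noproj: "\<exists>X\<in>Alg. P ** X ** (mat 1 - P) \<noteq> 0"
    if PP: "projection P" "P \<noteq> 0" "P \<noteq> mat 1" for P
  proof -
    obtain A where "A \<in> S" "P ** A ** (mat 1 - P) \<noteq> 0" using H PP by blast
    moreover have "A \<in> Alg" using pow_S[OF S \<open>A \<in> S\<close>] inAlg by blast
    ultimately show ?thesis by blast
  qed
  define E :: "'n \<times> 'n \<Rightarrow> complex^'n^'n"
    where "E p = (\<chi> r s. if r = fst p \<and> s = snd p then 1 else 0)" for p
  have "E p \<in> Alg" for p
    unfolding E_def by (rule burnside_units[OF sub one mult adjc noproj])
  then have "\<exists>k. E p \<in> subspace_pow S k" for p by (simp add: inAlg)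
  then obtain kk where kk: "\<And>p. E p \<in> subspace_pow S (kk p)" by metis
  define m where "m = Max (range kk)"
  have Em: "E p \<in> subspace_pow S m" for p
    using pow_mono[OF S _ kk[of p], of m] by (simp add: m_def)
  have "X \<in> subspace_pow S m" for X
  proof -
    have "X = (\<Sum>p\<in>UNIV. cscale (X $ fst p $ snd p) (E p))"
      unfolding E_def by (rule matrix_unit_expansion)
    also have "\<dots> \<in> subspace_pow S m"
      using Em by (intro cm.subspace_sum[OF pow_subspace] cm.subspace_scale[OF pow_subspace])
    finally show ?thesis .
  qed
  then show ?thesis by (auto simp: qgraph_connected_def)
qed

theorem theorem3p3:
  fixes S :: "(complex^'n^'n) set"
  assumes "operator_system S"
  shows "\<not> qgraph_connected S \<longleftrightarrow>
    (\<exists>P. projection P \<and> P \<noteq> 0 \<and> P \<noteq> mat 1 \<and> (\<forall>A\<in>S. P ** A ** (mat 1 - P) = 0))"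
proof
  assume "\<not> qgraph_connected S"
  then show "\<exists>P. projection P \<and> P \<noteq> 0 \<and> P \<noteq> mat 1 \<and> (\<forall>A\<in>S. P ** A ** (mat 1 - P) = 0)"
    using hard_direction[OF assms] by blast
next
  assume "\<exists>P. projection P \<and> P \<noteq> 0 \<and> P \<noteq> mat 1 \<and> (\<forall>A\<in>S. P ** A ** (mat 1 - P) = 0)"
  then show "\<not> qgraph_connected S" using easy_direction[OF assms] by blast
qed


end
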